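(* For any finite-rank $S,T\in\mathfrak S_1(\mathbb T)$, $$d(S,T)=\rho_1(f_S,f_T).$$
   Context: Rigged sets: each point has a multiplicity in $\{0,1,\dots,\infty\}$; an enumeration lists each point according to its multiplicity. $\mathfrak S_1(\mathbb T)$ is the set of countable rigged subsets of the unit circle $\mathbb T$ (identified with $[0,2\pi)$, arc-length metric) in which $1$ has infinite multiplicity, with no other accumulation point and with $d(S,\mathbf 1)<\infty$, where $d(S,T)=\inf\sum_j\mathrm{dist}(s_j,t_j)$ over enumerations $(s_j),(t_j)$ of $S,T$ and $\mathbf 1$ is $1$ with infinite multiplicity. $S$ has finite rank if it has finitely many points other than $1$ counting multiplicity. For such $S$, $f_S$ is the class, modulo addition of integer constants, of the function $(0,2\pi)\ni\theta\mapsto\#\{s\in S\setminus\{1\}:\theta<\arg s\}$ (counting multiplicity, $\arg s\in(0,2\pi)$). For two such classes $f,g$, $\rho_1(f,g)=\inf\int_0^{2\pi}|\tilde f(\theta)-\tilde g(\theta)|\,d\theta$ over all representatives $\tilde f$ of $f$ and $\tilde g$ of $g$. *)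

theory Defs
  imports "HOL-Analysis.Analysis" "HOL-Library.Extended_Nat"
begin

(* Points of the unit circle are represented by their angles in [0, 2*pi);
   the point 1 corresponds to angle 0.  A rigged subset is a multiplicity
   function on angles, zero outside [0, 2*pi). *)

definition dist_circ :: "real \<Rightarrow> real \<Rightarrow> real" where
  "dist_circ a b = min \<bar>a - b\<bar> (2 * pi - \<bar>a - b\<bar>)"

definition rigged :: "(real \<Rightarrow> enat) \<Rightarrow> bool" where
  "rigged m \<longleftrightarrow> (\<forall>x. m x \<noteq> 0 \<longrightarrow> 0 \<le> x \<and> x < 2 * pi)"

definition occ :: "(nat \<Rightarrow> real) \<Rightarrow> real \<Rightarrow> enat" where
  "occ s x = (if finite {j. s j = x} then enat (card {j. s j = x}) else \<infinity>)"

definition enumerates :: "(nat \<Rightarrow> real) \<Rightarrow> (real \<Rightarrow> enat) \<Rightarrow> bool" where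
  "enumerates s m \<longleftrightarrow> (\<forall>x. occ s x = m x)"

definition rdist :: "(real \<Rightarrow> enat) \<Rightarrow> (real \<Rightarrow> enat) \<Rightarrow> ennreal" where
  "rdist S T = (INF st \<in> {(s, t). enumerates s S \<and> enumerates t T}.
                  (\<Sum>j. ennreal (dist_circ (fst st j) (snd st j))))"

definition one_rig :: "real \<Rightarrow> enat" where
  "one_rig x = (if x = 0 then \<infinity> else 0)"

definition S1 :: "(real \<Rightarrow> enat) set" where
  "S1 = {m. rigged m \<and> countable {x. m x \<noteq> 0} \<and> m 0 = \<infinity> \<and>
           (\<forall>x. 0 < x \<and> x < 2 * pi \<longrightarrow>
              m x \<noteq> \<infinity> \<and> (\<exists>e>0. finite {y. m y \<noteq> 0 \<and> dist_circ x y < e})) \<and>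
           rdist m one_rig < \<infinity>}"

definition finite_rank :: "(real \<Rightarrow> enat) \<Rightarrow> bool" where
  "finite_rank m \<longleftrightarrow> finite {x. x \<noteq> 0 \<and> m x \<noteq> 0} \<and> (\<forall>x. x \<noteq> 0 \<longrightarrow> m x \<noteq> \<infinity>)"

definition fS :: "(real \<Rightarrow> enat) \<Rightarrow> real \<Rightarrow> real" where
  "fS m \<theta> = (\<Sum>x\<in>{x. x \<noteq> 0 \<and> m x \<noteq> 0 \<and> \<theta> < x}. real (the_enat (m x)))"

(* rho_1 of the classes of f and g modulo integer constants *)
definition rho1 :: "(real \<Rightarrow> real) \<Rightarrow> (real \<Rightarrow> real) \<Rightarrow> real" where
  "rho1 f g = Inf {integral {0..2 * pi} (\<lambda>\<theta>. \<bar>(f \<theta> + of_int a) - (g \<theta> + of_int b)\<bar>) | a b :: int. True}"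

end

theory Submission
  imports Defs
begin

definition Ind :: "real \<Rightarrow> real \<Rightarrow> real" where
  "Ind a \<theta> = (if \<theta> < a then 1 else 0)"

lemma Ind_has_integral:
  assumes "0 \<le> a" "a \<le> 2*pi"
  shows "(Ind a has_integral a) {0..2*pi}"
proof -
  have "((\<lambda>x. if x \<in> {0..a} then (1::real) else 0) has_integral a) {0..2*pi}"
    using assms has_integral_const_real[of "1::real" 0 a] by (subst has_integral_restrict) auto
  then show ?thesis
  proof (rule has_integral_spike[where S="{a}", rotated 2])
    show "negligible {a}" by simp
  qed (auto simp: Ind_def)
qed

lemma Ind_abs_int: "Ind a absolutely_integrable_on {0..2*pi}"
proof -
  have "Ind (max 0 (min a (2*pi))) integrable_on {0..2*pi}"
  proof -
    have "0 \<le> max 0 (min a (2*pi))" "max 0 (min a (2*pi)) \<le> 2*pi" using pi_gt_zero by auto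
    then show ?thesis using Ind_has_integral[of "max 0 (min a (2*pi))"] by (auto simp: integrable_on_def)
  qed
  moreover have "\<forall>x\<in>{0..2*pi} - {2*pi}. Ind (max 0 (min a (2*pi))) x = Ind a x"
    by (auto simp: Ind_def)
  ultimately have "Ind a integrable_on {0..2*pi}"
    using integrable_spike_finite[of "{2*pi}" "{0..2*pi}" "Ind a" "Ind (max 0 (min a (2*pi)))"] by simp
  then show ?thesis by (rule nonnegative_absolutely_integrable_1) (auto simp: Ind_def)
qed

lemma Ind_int: "Ind a integrable_on {0..2*pi}"
  using Ind_abs_int absolutely_integrable_on_def by blast

definition F :: "real multiset \<Rightarrow> real \<Rightarrow> real" where
  "F A \<theta> = (\<Sum>x\<in>#A. Ind x \<theta>)"

definition DD :: "real multiset \<Rightarrow> real multiset \<Rightarrow> int \<Rightarrow> real \<Rightarrow> real" where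
  "DD A B c \<theta> = F A \<theta> - F B \<theta> - of_int c"

lemma F_empty[simp]: "F {#} \<theta> = 0" by (simp add: F_def)
lemma F_add[simp]: "F (add_mset x A) \<theta> = Ind x \<theta> + F A \<theta>" by (simp add: F_def)
lemma F_union[simp]: "F (A + B) \<theta> = F A \<theta> + F B \<theta>" by (simp add: F_def)

lemma F_remove: "x \<in># A \<Longrightarrow> F A \<theta> = Ind x \<theta> + F (A - {#x#}) \<theta>"
  by (metis F_add insert_DiffM)

lemma F_le_size: "F A \<theta> \<le> real (size A)"
  by (induction A) (auto simp: Ind_def)

lemma F_all_gt: "(\<forall>z\<in>#A. \<theta> < z) \<Longrightarrow> F A \<theta> = real (size A)"
  by (induction A) (auto simp: Ind_def)

lemma F_zeros: "0 \<le> \<theta> \<Longrightarrow> F (replicate_mset k 0) \<theta> = 0"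
  by (induction k) (auto simp: Ind_def)

lemma F_abs_int: "F A absolutely_integrable_on {0..2*pi}"
proof (induction A)
  case empty
  then show ?case by (simp add: F_def)
next
  case (add x A)
  then show ?case using Ind_abs_int[of x] by (simp add: set_integral_add(1))
qed

lemma DD_abs_int: "DD A B c absolutely_integrable_on {0..2*pi}"
proof -
  have "(\<lambda>\<theta>. F A \<theta> - F B \<theta> - of_int c) absolutely_integrable_on {0..2*pi}"
    by (intro set_integral_diff(1) F_abs_int absolutely_integrable_on_const) auto
  then show ?thesis by (simp add: DD_def[abs_def])
qed

lemma absDD_int: "(\<lambda>\<theta>. \<bar>DD A B c \<theta>\<bar>) integrable_on {0..2*pi}"
  using DD_abs_int[of A B c] unfolding absolutely_integrable_on_def by simp

lemma int_decomp:
  assumes "\<And>\<theta>. \<theta> \<in> {0..2*pi} \<Longrightarrow> \<bar>f \<theta>\<bar> = \<bar>g \<theta>\<bar> + h \<theta>"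
    and "(h has_integral L) {0..2*pi}" and "(\<lambda>\<theta>. \<bar>g \<theta>\<bar>) integrable_on {0..2*pi}"
  shows "integral {0..2*pi} (\<lambda>\<theta>. \<bar>f \<theta>\<bar>) = integral {0..2*pi} (\<lambda>\<theta>. \<bar>g \<theta>\<bar>) + L"
proof -
  have "integral {0..2*pi} (\<lambda>\<theta>. \<bar>f \<theta>\<bar>) = integral {0..2*pi} (\<lambda>\<theta>. \<bar>g \<theta>\<bar> + h \<theta>)"
    using assms(1) by (intro integral_cong) auto
  also have "\<dots> = integral {0..2*pi} (\<lambda>\<theta>. \<bar>g \<theta>\<bar>) + integral {0..2*pi} h"
    using assms(2,3) by (intro integral_add) (auto simp: integrable_on_def)
  finally show ?thesis using assms(2) integral_unique by simp
qed

definition cost :: "(real \<times> real) list \<Rightarrow> real" where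
  "cost P = (\<Sum>p\<leftarrow>P. dist_circ (fst p) (snd p))"

definition GI :: "real multiset \<Rightarrow> real multiset \<Rightarrow> int \<Rightarrow> real" where
  "GI A B c = integral {0..2*pi} (\<lambda>\<theta>. \<bar>DD A B c \<theta>\<bar>)"

definition Good :: "real multiset \<Rightarrow> real multiset \<Rightarrow> int \<Rightarrow> bool" where
  "Good A B c \<longleftrightarrow> (\<exists>P k l. mset (map fst P) = A + replicate_mset k 0 \<and>
      mset (map snd P) = B + replicate_mset l 0 \<and> cost P \<le> GI A B c)"

definition rng :: "real multiset \<Rightarrow> bool" where
  "rng A \<longleftrightarrow> (\<forall>x\<in>#A. 0 < x \<and> x < 2*pi)"

lemma dist_circ_sym: "dist_circ a b = dist_circ b a"
  by (simp add: dist_circ_def abs_minus_commute)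

lemma Good_swap: "Good B A (-c) \<Longrightarrow> Good A B c"
proof -
  assume "Good B A (-c)"
  then obtain P k l where P: "mset (map fst P) = B + replicate_mset k 0"
     "mset (map snd P) = A + replicate_mset l 0" "cost P \<le> GI B A (-c)"
    unfolding Good_def by blast
  have "GI B A (-c) = GI A B c"
    unfolding GI_def DD_def by (intro integral_cong) (simp add: abs_minus_commute)
  moreover have "cost (map prod.swap P) = cost P"
    unfolding cost_def by (simp add: o_def dist_circ_sym)
  ultimately show "Good A B c" unfolding Good_def using P
    by (intro exI[of _ "map prod.swap P"] exI[of _ l] exI[of _ k]) (simp add: o_def)
qed

lemma move_a:
  assumes x: "x \<in># A" and r: "rng A"
    and pos: "\<And>\<theta>. \<theta> \<in> {0..2*pi} \<Longrightarrow> \<theta> < x \<Longrightarrow> DD A B c \<theta> \<ge> 1"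
    and G: "Good (A - {#x#}) B c"
  shows "Good A B c"
proof -
  obtain P k l where P: "mset (map fst P) = (A - {#x#}) + replicate_mset k 0"
     "mset (map snd P) = B + replicate_mset l 0" "cost P \<le> GI (A - {#x#}) B c"
    using G unfolding Good_def by blast
  have xr: "0 < x" "x < 2*pi" using r x unfolding rng_def by auto
  have eq: "DD A B c \<theta> = Ind x \<theta> + DD (A - {#x#}) B c \<theta>" for \<theta>
    unfolding DD_def using F_remove[OF x] by simp
  have "GI A B c = GI (A - {#x#}) B c + x"
    unfolding GI_def
  proof (rule int_decomp[OF _ Ind_has_integral absDD_int])
    fix \<theta> :: real assume "\<theta> \<in> {0..2*pi}"
    then show "\<bar>DD A B c \<theta>\<bar> = \<bar>DD (A - {#x#}) B c \<theta>\<bar> + Ind x \<theta>"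
      using pos[of \<theta>] eq[of \<theta>] by (auto simp: Ind_def)
  qed (use xr in auto)
  moreover have "dist_circ x 0 \<le> x" using xr by (simp add: dist_circ_def)
  ultimately have "cost ((x,0) # P) \<le> GI A B c" using P(3) by (simp add: cost_def)
  moreover have "mset (map fst ((x,0) # P)) = A + replicate_mset k 0"
    using P(1) x by simp
  moreover have "mset (map snd ((x,0) # P)) = B + replicate_mset (Suc l) 0"
    using P(2) by simp
  ultimately show ?thesis unfolding Good_def by blast
qed

lemma move_c:
  assumes x: "x \<in># A" and r: "rng A"
    and neg: "\<And>\<theta>. \<theta> \<in> {0..2*pi} \<Longrightarrow> x \<le> \<theta> \<Longrightarrow> DD A B c \<theta> \<le> -1"
    and G: "Good (A - {#x#}) B (c - 1)"
  shows "Good A B c"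
proof -
  obtain P k l where P: "mset (map fst P) = (A - {#x#}) + replicate_mset k 0"
     "mset (map snd P) = B + replicate_mset l 0" "cost P \<le> GI (A - {#x#}) B (c - 1)"
    using G unfolding Good_def by blast
  have xr: "0 < x" "x < 2*pi" using r x unfolding rng_def by auto
  have eq: "DD (A - {#x#}) B (c - 1) \<theta> = DD A B c \<theta> - Ind x \<theta> + 1" for \<theta>
    unfolding DD_def using F_remove[OF x] by simp
  have hi: "((\<lambda>\<theta>. 1 - Ind x \<theta>) has_integral (2*pi - x)) {0..2*pi}"
    using has_integral_diff[OF has_integral_const_real[of "1::real" 0 "2*pi"] Ind_has_integral[of x]] xr
    by simp
  have "GI A B c = GI (A - {#x#}) B (c - 1) + (2*pi - x)"
    unfolding GI_def
  proof (rule int_decomp[OF _ hi absDD_int])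
    fix \<theta> :: real assume "\<theta> \<in> {0..2*pi}"
    then show "\<bar>DD A B c \<theta>\<bar> = \<bar>DD (A - {#x#}) B (c - 1) \<theta>\<bar> + (1 - Ind x \<theta>)"
      using neg[of \<theta>] eq[of \<theta>] by (auto simp: Ind_def)
  qed
  moreover have "dist_circ x 0 \<le> 2*pi - x" using xr by (simp add: dist_circ_def)
  ultimately have "cost ((x,0) # P) \<le> GI A B c" using P(3) by (simp add: cost_def)
  moreover have "mset (map fst ((x,0) # P)) = A + replicate_mset k 0"
    using P(1) x by simp
  moreover have "mset (map snd ((x,0) # P)) = B + replicate_mset (Suc l) 0"
    using P(2) by simp
  ultimately show ?thesis unfolding Good_def by blast
qed

lemma move_e:
  assumes x: "x \<in># A" and y: "y \<in># B" and xy: "x \<le> y" and r: "rng A" "rng B"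
    and neg: "\<And>\<theta>. \<theta> \<in> {0..2*pi} \<Longrightarrow> x \<le> \<theta> \<Longrightarrow> \<theta> < y \<Longrightarrow> DD A B c \<theta> \<le> -1"
    and G: "Good (A - {#x#}) (B - {#y#}) c"
  shows "Good A B c"
proof -
  obtain P k l where P: "mset (map fst P) = (A - {#x#}) + replicate_mset k 0"
     "mset (map snd P) = (B - {#y#}) + replicate_mset l 0" "cost P \<le> GI (A - {#x#}) (B - {#y#}) c"
    using G unfolding Good_def by blast
  have xr: "0 < x" "x < 2*pi" using r x unfolding rng_def by auto
  have yr: "0 < y" "y < 2*pi" using r y unfolding rng_def by auto
  have eq: "DD (A - {#x#}) (B - {#y#}) c \<theta> = DD A B c \<theta> - Ind x \<theta> + Ind y \<theta>" for \<theta>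
    unfolding DD_def using F_remove[OF x] F_remove[OF y] by simp
  have hi: "((\<lambda>\<theta>. Ind y \<theta> - Ind x \<theta>) has_integral (y - x)) {0..2*pi}"
    using has_integral_diff[OF Ind_has_integral[of y] Ind_has_integral[of x]] xr yr
    by simp
  have "GI A B c = GI (A - {#x#}) (B - {#y#}) c + (y - x)"
    unfolding GI_def
  proof (rule int_decomp[OF _ hi absDD_int])
    fix \<theta> :: real assume "\<theta> \<in> {0..2*pi}"
    then show "\<bar>DD A B c \<theta>\<bar> = \<bar>DD (A - {#x#}) (B - {#y#}) c \<theta>\<bar> + (Ind y \<theta> - Ind x \<theta>)"
      using neg[of \<theta>] eq[of \<theta>] xy by (auto simp: Ind_def)
  qed
  moreover have "dist_circ x y \<le> y - x" using xy by (simp add: dist_circ_def)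
  ultimately have "cost ((x,y) # P) \<le> GI A B c" using P(3) by (simp add: cost_def)
  moreover have "mset (map fst ((x,y) # P)) = A + replicate_mset k 0"
    using P(1) x by simp
  moreover have "mset (map snd ((x,y) # P)) = B + replicate_mset l 0"
    using P(2) y by simp
  ultimately show ?thesis unfolding Good_def by blast
qed

lemma rng_diff: "rng A \<Longrightarrow> rng (A - M)"
  unfolding rng_def by (meson in_diffD)

lemma stepA:
  assumes IH: "\<And>A' B' c'. size A' + size B' < size A + size B \<Longrightarrow> rng A' \<Longrightarrow> rng B' \<Longrightarrow> Good A' B' c'"
    and x: "x \<in># A" and mn: "\<forall>z\<in>#A+B. x \<le> z" and rA: "rng A" and rB: "rng B"
  shows "Good A B c"
proof -
  define d0 :: int where "d0 = int (size A) - int (size B) - c"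
  have sA: "size (A - {#x#}) < size A" using x by (rule size_Diff1_less)
  have sA1: "real (size (A - {#x#})) = real (size A) - 1"
  proof -
    have "1 \<le> size A" using sA by linarith
    then show ?thesis by (simp add: size_Diff_singleton[OF x] of_nat_diff)
  qed
  have low: "DD A B c \<theta> = of_int d0" if "\<theta> < x" for \<theta>
  proof -
    have "F A \<theta> = real (size A)" using mn that by (intro F_all_gt ballI) (metis union_iff less_le_trans)
    moreover have "F B \<theta> = real (size B)" using mn that by (intro F_all_gt ballI) (metis union_iff less_le_trans)
    ultimately show ?thesis by (simp add: DD_def d0_def)
  qed
  have upA: "F A \<theta> \<le> real (size A) - 1" if "x \<le> \<theta>" for \<theta>
    using F_remove[OF x, of \<theta>] F_le_size[of "A - {#x#}" \<theta>] that sA1 by (simp add: Ind_def)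
  show ?thesis
  proof (cases "d0 \<ge> 1")
    case True
    show ?thesis
    proof (rule move_a[OF x rA])
      show "Good (A - {#x#}) B c" using IH[of "A - {#x#}" B c] sA rng_diff[OF rA] rB by simp
    qed (use low True in simp)
  next
    case False
    show ?thesis
    proof (cases "B = {#}")
      case True
      show ?thesis
      proof (rule move_c[OF x rA])
        show "Good (A - {#x#}) B (c - 1)" using IH[of "A - {#x#}" B "c - 1"] sA rng_diff[OF rA] rB by simp
        fix \<theta> :: real assume "x \<le> \<theta>"
        then show "DD A B c \<theta> \<le> -1" using upA[of \<theta>] False True by (simp add: DD_def d0_def)
      qed
    next
      case Bne: False
      define y where "y = Min (set_mset B)"
      have y: "y \<in># B" using Bne unfolding y_def by (simp add: Min_in)
      have ymin: "\<forall>z\<in>#B. y \<le> z" unfolding y_def by simp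
      have xy: "x \<le> y" using mn y by simp
      have sB: "size (B - {#y#}) < size B" using y by (rule size_Diff1_less)
      show ?thesis
      proof (rule move_e[OF x y xy rA rB])
        show "Good (A - {#x#}) (B - {#y#}) c"
          using IH[of "A - {#x#}" "B - {#y#}" c] sA sB rng_diff[OF rA] rng_diff[OF rB] by simp
        fix \<theta> :: real assume th: "x \<le> \<theta>" "\<theta> < y"
        have "F B \<theta> = real (size B)" using ymin th by (intro F_all_gt ballI) (metis less_le_trans)
        then show "DD A B c \<theta> \<le> -1" using upA[OF th(1)] False by (simp add: DD_def d0_def)
      qed
    qed
  qed
qed

lemma good_all: "rng A \<Longrightarrow> rng B \<Longrightarrow> Good A B c"
proof (induction "size A + size B" arbitrary: A B c rule: less_induct)
  case (less A B c)
  show "Good A B c"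
  proof (cases "A + B = {#}")
    case True
    then have "A = {#}" "B = {#}" by auto
    moreover have "0 \<le> GI A B c" unfolding GI_def by (rule integral_nonneg[OF absDD_int]) auto
    ultimately show "Good A B c" unfolding Good_def
      by (intro exI[of _ "[]"] exI[of _ 0]) (simp add: cost_def)
  next
    case False
    define x where "x = Min (set_mset (A + B))"
    have "set_mset (A + B) \<noteq> {}" using False by simp
    from Min_in[OF finite_set_mset this] have x: "x \<in># A + B" unfolding x_def .
    have mn: "\<forall>z\<in>#A+B. x \<le> z" unfolding x_def by simp
    show "Good A B c"
    proof (cases "x \<in># A")
      case True
      show "Good A B c" by (rule stepA[OF _ True mn less.prems]) (use less.hyps in auto)
    next
      case False
      then have xB: "x \<in># B" using x by simp
      have "Good B A (-c)"
        by (rule stepA[OF _ xB _ less.prems(2,1)]) (use less.hyps mn in \<open>auto simp: add.commute\<close>)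
      then show "Good A B c" by (rule Good_swap)
    qed
  qed
qed

lemma DD_union: "DD (A + A') (B + B') (c + c') \<theta> = DD A B c \<theta> + DD A' B' c' \<theta>"
  by (simp add: DD_def)

lemma GI_tri: "GI (A + A') (B + B') (c + c') \<le> GI A B c + GI A' B' c'"
proof -
  have "GI (A + A') (B + B') (c + c') \<le> integral {0..2*pi} (\<lambda>\<theta>. \<bar>DD A B c \<theta>\<bar> + \<bar>DD A' B' c' \<theta>\<bar>)"
    unfolding GI_def DD_union
    by (intro integral_le absDD_int[of "A + A'" "B + B'" "c + c'", unfolded DD_union] integrable_add absDD_int) auto
  also have "\<dots> = GI A B c + GI A' B' c'"
    unfolding GI_def by (intro integral_add absDD_int)
  finally show ?thesis .
qed

lemma GI_pair:
  assumes "0 \<le> x" "x < 2*pi" "0 \<le> y" "y < 2*pi"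
  shows "\<exists>c. GI {#x#} {#y#} c = dist_circ x y"
proof -
  have DDp: "DD {#x#} {#y#} c \<theta> = Ind x \<theta> - Ind y \<theta> - of_int c" for c \<theta>
    by (simp add: DD_def)
  have ix: "(Ind x has_integral x) {0..2*pi}" and iy: "(Ind y has_integral y) {0..2*pi}"
    using assms by (auto intro!: Ind_has_integral)
  have one: "((\<lambda>\<theta>. 1::real) has_integral 2*pi) {0..2*pi}"
    using has_integral_const_real[of "1::real" 0 "2*pi"] by simp
  show ?thesis
  proof (cases "\<bar>x - y\<bar> \<le> 2*pi - \<bar>x - y\<bar>")
    case True
    have "GI {#x#} {#y#} 0 = integral {0..2*pi} (\<lambda>\<theta>. Ind (max x y) \<theta> - Ind (min x y) \<theta>)"
      unfolding GI_def DDp by (intro integral_cong) (auto simp: Ind_def)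
    also have "\<dots> = max x y - min x y"
      using has_integral_diff[OF Ind_has_integral[of "max x y"] Ind_has_integral[of "min x y"]] assms
      by (intro integral_unique) auto
    also have "\<dots> = dist_circ x y" using True by (auto simp: dist_circ_def)
    finally show ?thesis by blast
  next
    case False
    show ?thesis
    proof (cases "y < x")
      case True
      have "GI {#x#} {#y#} 1 = integral {0..2*pi} (\<lambda>\<theta>. (1 - Ind x \<theta>) + Ind y \<theta>)"
        unfolding GI_def DDp using True by (intro integral_cong) (auto simp: Ind_def)
      also have "\<dots> = (2*pi - x) + y"
        using has_integral_add[OF has_integral_diff[OF one ix] iy] by (intro integral_unique) auto
      also have "\<dots> = dist_circ x y" using True False by (auto simp: dist_circ_def)
      finally show ?thesis by blast
    next
      case False2: False
      have "GI {#x#} {#y#} (-1) = integral {0..2*pi} (\<lambda>\<theta>. (1 - Ind y \<theta>) + Ind x \<theta>)"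
        unfolding GI_def DDp using False2 by (intro integral_cong) (auto simp: Ind_def)
      also have "\<dots> = (2*pi - y) + x"
        using has_integral_add[OF has_integral_diff[OF one iy] ix] by (intro integral_unique) auto
      also have "\<dots> = dist_circ x y" using False2 False by (auto simp: dist_circ_def)
      finally show ?thesis by blast
    qed
  qed
qed

lemma lower:
  assumes "finite J" "\<And>j. j \<in> J \<Longrightarrow> 0 \<le> s j \<and> s j < 2*pi \<and> 0 \<le> t j \<and> t j < 2*pi"
  shows "\<exists>c. GI (image_mset s (mset_set J)) (image_mset t (mset_set J)) c \<le> (\<Sum>j\<in>J. dist_circ (s j) (t j))"
  using assms
proof (induction J rule: finite_induct)
  case empty
  have "GI {#} {#} 0 = 0" unfolding GI_def by (simp add: DD_def)
  then show ?case by (intro exI[of _ 0]) simp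
next
  case (insert j J)
  obtain c where c: "GI (image_mset s (mset_set J)) (image_mset t (mset_set J)) c \<le> (\<Sum>j\<in>J. dist_circ (s j) (t j))"
    using insert by auto
  obtain c' where c': "GI {#s j#} {#t j#} c' = dist_circ (s j) (t j)"
    using GI_pair insert.prems[of j] by auto
  have "GI (image_mset s (mset_set J) + {#s j#}) (image_mset t (mset_set J) + {#t j#}) (c + c')
     \<le> GI (image_mset s (mset_set J)) (image_mset t (mset_set J)) c + GI {#s j#} {#t j#} c'"
    by (rule GI_tri)
  then show ?case using c c' insert.hyps
    by (intro exI[of _ "c + c'"]) (simp add: add.commute)
qed

lemma occ_nonzero: "s j = x \<Longrightarrow> occ s x \<noteq> 0"
proof -
  assume "s j = x"
  then have "{i. s i = x} \<noteq> {}" by auto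
  then show ?thesis unfolding occ_def by (auto simp: zero_enat_def)
qed

lemma enum_rng:
  assumes "S \<in> S1" "enumerates s S"
  shows "0 \<le> s j \<and> s j < 2*pi"
proof -
  have "S (s j) \<noteq> 0" using occ_nonzero[of s j "s j"] assms(2) unfolding enumerates_def by auto
  then show ?thesis using assms(1) unfolding S1_def rigged_def by auto
qed

lemma enum_fin_occ:
  assumes "finite_rank S" "enumerates s S" "x \<noteq> 0"
  shows "finite {j. s j = x} \<and> S x = enat (card {j. s j = x})"
proof -
  have "S x \<noteq> \<infinity>" using assms(1,3) unfolding finite_rank_def by auto
  then show ?thesis using assms(2) unfolding enumerates_def occ_def
    by (metis enat.distinct(2))
qed

lemma enum_fin:
  assumes "finite_rank S" "enumerates s S"
  shows "finite {j. s j \<noteq> 0}"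
proof -
  have V: "finite {x. x \<noteq> 0 \<and> S x \<noteq> 0}" using assms(1) unfolding finite_rank_def by auto
  have "{j. s j \<noteq> 0} \<subseteq> (\<Union>x\<in>{x. x \<noteq> 0 \<and> S x \<noteq> 0}. {j. s j = x})"
    using occ_nonzero[of s] assms(2) unfolding enumerates_def by fastforce
  moreover have "finite (\<Union>x\<in>{x. x \<noteq> 0 \<and> S x \<noteq> 0}. {j. s j = x})"
    using V enum_fin_occ[OF assms] by auto
  ultimately show ?thesis by (rule finite_subset)
qed

lemma fS_enum:
  assumes "finite_rank S" "enumerates s S" "finite J" "{j. s j \<noteq> 0} \<subseteq> J" "0 \<le> \<theta>"
  shows "fS S \<theta> = (\<Sum>j\<in>J. Ind (s j) \<theta>)"
proof -
  define V where "V = {x. x \<noteq> 0 \<and> S x \<noteq> 0}"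
  define J' where "J' = {j. s j \<noteq> 0}"
  have V: "finite V" using assms(1) unfolding finite_rank_def V_def by auto
  have J': "finite J'" using enum_fin[OF assms(1,2)] unfolding J'_def .
  have "(\<Sum>j\<in>J. Ind (s j) \<theta>) = (\<Sum>j\<in>J'. Ind (s j) \<theta>)"
    using assms(3,4,5) unfolding J'_def by (intro sum.mono_neutral_right) (auto simp: Ind_def)
  also have "\<dots> = (\<Sum>x\<in>s ` J'. \<Sum>j\<in>{j\<in>J'. s j = x}. Ind (s j) \<theta>)"
    using J' by (rule sum.image_gen)
  also have "\<dots> = (\<Sum>x\<in>V. real (the_enat (S x)) * Ind x \<theta>)"
  proof (rule sum.cong)
    show "s ` J' = V"
    proof
      show "s ` J' \<subseteq> V"
        using occ_nonzero[of s] assms(2) unfolding enumerates_def J'_def V_def by fastforce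
      show "V \<subseteq> s ` J'"
      proof
        fix x assume "x \<in> V"
        then have x: "x \<noteq> 0" "S x \<noteq> 0" unfolding V_def by auto
        then have "card {j. s j = x} \<noteq> 0" using enum_fin_occ[OF assms(1,2) x(1)] by (auto simp: zero_enat_def)
        then obtain j where "s j = x" by (metis (mono_tags, lifting) card.empty empty_Collect_eq)
        then show "x \<in> s ` J'" using x unfolding J'_def by auto
      qed
    qed
  next
    fix x assume "x \<in> V"
    then have x: "x \<noteq> 0" unfolding V_def by auto
    have "{j\<in>J'. s j = x} = {j. s j = x}" using x unfolding J'_def by auto
    then show "(\<Sum>j\<in>{j\<in>J'. s j = x}. Ind (s j) \<theta>) = real (the_enat (S x)) * Ind x \<theta>"
      using enum_fin_occ[OF assms(1,2) x] by simp
  qed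
  also have "\<dots> = fS S \<theta>"
  proof -
    have e: "{x. x \<noteq> 0 \<and> S x \<noteq> 0 \<and> \<theta> < x} = {x\<in>V. \<theta> < x}" by (auto simp: V_def)
    show ?thesis unfolding fS_def e sum.inter_filter[OF V] by (intro sum.cong) (auto simp: Ind_def)
  qed
  finally show ?thesis ..
qed

lemma F_image: "F (image_mset s (mset_set J)) \<theta> = (\<Sum>j\<in>J. Ind (s j) \<theta>)"
  unfolding F_def by (simp add: sum_unfold_sum_mset image_mset.compositionality o_def)

lemma enum_list:
  assumes "\<And>x. x \<noteq> 0 \<Longrightarrow> count (mset xs) x = the_enat (S x)" "S 0 = \<infinity>"
    "\<And>x. x \<noteq> 0 \<Longrightarrow> S x \<noteq> \<infinity>"
  shows "enumerates (\<lambda>j. if j < length xs then xs!j else 0) S"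
  unfolding enumerates_def
proof
  fix x :: real
  define s where "s = (\<lambda>j. if j < length xs then xs!j else (0::real))"
  show "occ (\<lambda>j. if j < length xs then xs!j else 0) x = S x"
  proof (cases "x = 0")
    case True
    have "{length xs..} \<subseteq> {j. s j = x}" using True unfolding s_def by auto
    then have "infinite {j. s j = x}" using infinite_Ici finite_subset by blast
    then show ?thesis using True assms(2) unfolding occ_def s_def by simp
  next
    case False
    have e: "{j. s j = x} = {i. i < length xs \<and> x = xs ! i}" using False unfolding s_def by auto
    have "card {j. s j = x} = count (mset xs) x"
      unfolding e count_mset count_list_eq_length_filter length_filter_conv_card by simp
    then have "card {j. s j = x} = the_enat (S x)" using assms(1)[OF False] by simp
    moreover have "finite {j. s j = x}" unfolding e by simp
    ultimately show ?thesis using assms(3)[OF False] unfolding occ_def s_def[symmetric]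
      by (cases "S x") auto
  qed
qed

definition AS :: "(real \<Rightarrow> enat) \<Rightarrow> real multiset" where
  "AS S = Abs_multiset (\<lambda>x. if x = 0 then 0 else the_enat (S x))"

lemma count_AS:
  assumes "finite_rank S"
  shows "count (AS S) x = (if x = 0 then 0 else the_enat (S x))"
proof -
  have "{x. 0 < (if x = 0 then 0 else the_enat (S x))} \<subseteq> {x. x \<noteq> 0 \<and> S x \<noteq> 0}"
    by (auto simp: zero_enat_def)
  then have "finite {x. 0 < (if x = 0 then 0 else the_enat (S x))}"
    using assms unfolding finite_rank_def by (meson finite_subset)
  then show ?thesis unfolding AS_def by (simp add: count_Abs_multiset)
qed

lemma rng_AS:
  assumes "S \<in> S1" "finite_rank S"
  shows "rng (AS S)"
  unfolding rng_def
proof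
  fix x assume "x \<in># AS S"
  then have "count (AS S) x \<noteq> 0" by simp
  then have "x \<noteq> 0" "S x \<noteq> 0" using count_AS[OF assms(2), of x] by (auto split: if_splits simp: zero_enat_def)
  then show "0 < x \<and> x < 2*pi" using assms(1) unfolding S1_def rigged_def by force
qed

lemma rho1_set:
  assumes "\<And>\<theta>. \<theta> \<in> {0..2*pi} \<Longrightarrow> fS S \<theta> = F A \<theta> \<and> fS T \<theta> = F B \<theta>"
  shows "{integral {0..2 * pi} (\<lambda>\<theta>. \<bar>(fS S \<theta> + of_int a) - (fS T \<theta> + of_int b)\<bar>) | a b :: int. True}
         = range (GI A B)"
proof -
  have key: "integral {0..2 * pi} (\<lambda>\<theta>. \<bar>(fS S \<theta> + of_int a) - (fS T \<theta> + of_int b)\<bar>) = GI A B (b - a)"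
    for a b :: int
    unfolding GI_def DD_def using assms by (intro integral_cong) (auto simp: algebra_simps)
  show ?thesis
  proof (intro equalityI subsetI)
    fix v assume "v \<in> range (GI A B)"
    then obtain c where "v = GI A B c" by auto
    then show "v \<in> {integral {0..2 * pi} (\<lambda>\<theta>. \<bar>(fS S \<theta> + of_int a) - (fS T \<theta> + of_int b)\<bar>) | a b :: int. True}"
      using key[of 0 c] by (intro CollectI exI[of _ 0] exI[of _ c]) simp
  next
    fix v assume "v \<in> {integral {0..2 * pi} (\<lambda>\<theta>. \<bar>(fS S \<theta> + of_int a) - (fS T \<theta> + of_int b)\<bar>) | a b :: int. True}"
    then show "v \<in> range (GI A B)" using key by auto
  qed
qed

lemma GI_nonneg: "0 \<le> GI A B c"
  unfolding GI_def by (rule integral_nonneg[OF absDD_int]) auto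

lemma rho1_props:
  assumes "\<And>\<theta>. \<theta> \<in> {0..2*pi} \<Longrightarrow> fS S \<theta> = F A \<theta> \<and> fS T \<theta> = F B \<theta>"
  shows "rho1 (fS S) (fS T) \<le> GI A B c" "0 \<le> rho1 (fS S) (fS T)"
    "\<forall>e>0. \<exists>c. GI A B c < rho1 (fS S) (fS T) + e"
proof -
  have r: "rho1 (fS S) (fS T) = Inf (range (GI A B))"
    unfolding rho1_def using rho1_set[OF assms] by simp
  have bdd: "bdd_below (range (GI A B))" using GI_nonneg by (intro bdd_belowI) auto
  show "rho1 (fS S) (fS T) \<le> GI A B c" unfolding r by (rule cInf_lower[OF _ bdd]) auto
  show "0 \<le> rho1 (fS S) (fS T)" unfolding r by (rule cInf_greatest) (auto simp: GI_nonneg)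
  show "\<forall>e>0. \<exists>c. GI A B c < rho1 (fS S) (fS T) + e"
  proof (intro allI impI)
    fix e :: real assume "e > 0"
    then have "Inf (range (GI A B)) < Inf (range (GI A B)) + e" by simp
    from cInf_lessD[OF _ this] show "\<exists>c. GI A B c < rho1 (fS S) (fS T) + e" unfolding r by auto
  qed
qed

lemma mset_nth:
  "mset xs = image_mset (\<lambda>i. if i < length xs then xs!i else 0) (mset_set {..<length xs})"
proof -
  have "mset xs = mset (map (\<lambda>i. xs!i) [0..<length xs])" by (simp add: map_nth)
  also have "\<dots> = image_mset (\<lambda>i. xs!i) (mset_set {..<length xs})" by (simp add: mset_upt atLeast0LessThan)
  also have "\<dots> = image_mset (\<lambda>i. if i < length xs then xs!i else 0) (mset_set {..<length xs})"
    by (intro image_mset_cong) auto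
  finally show ?thesis .
qed

lemma from_good:
  assumes S: "S \<in> S1" "finite_rank S" and T: "T \<in> S1" "finite_rank T"
    and G: "Good (AS S) (AS T) c"
  shows "rdist S T \<le> ennreal (GI (AS S) (AS T) c)"
    "\<And>\<theta>. \<theta> \<in> {0..2*pi} \<Longrightarrow> fS S \<theta> = F (AS S) \<theta> \<and> fS T \<theta> = F (AS T) \<theta>"
proof -
  obtain P k l where P: "mset (map fst P) = AS S + replicate_mset k 0"
     "mset (map snd P) = AS T + replicate_mset l 0" "cost P \<le> GI (AS S) (AS T) c"
    using G unfolding Good_def by blast
  define xs where "xs = map fst P"
  define ys where "ys = map snd P"
  define s where "s = (\<lambda>j. if j < length xs then xs!j else 0)"
  define t where "t = (\<lambda>j. if j < length ys then ys!j else 0)"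
  have S0: "S 0 = \<infinity>" "T 0 = \<infinity>" using S(1) T(1) unfolding S1_def by auto
  have Sfin: "\<And>x. x \<noteq> 0 \<Longrightarrow> S x \<noteq> \<infinity>" "\<And>x. x \<noteq> 0 \<Longrightarrow> T x \<noteq> \<infinity>"
    using S(2) T(2) unfolding finite_rank_def by auto
  have xsA: "mset xs = AS S + replicate_mset k 0" using P(1) xs_def by simp
  have ysA: "mset ys = AS T + replicate_mset l 0" using P(2) ys_def by simp
  have es: "enumerates s S" unfolding s_def
    by (rule enum_list[of xs S]) (auto simp: xsA count_AS[OF S(2)] S0 Sfin)
  have et: "enumerates t T" unfolding t_def
    by (rule enum_list[of ys T]) (auto simp: ysA count_AS[OF T(2)] S0 Sfin)
  have len: "length xs = length P" "length ys = length P" by (auto simp: xs_def ys_def)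
  have "rdist S T \<le> (\<Sum>j. ennreal (dist_circ (s j) (t j)))"
  proof -
    have "(s, t) \<in> {(s, t). enumerates s S \<and> enumerates t T}" using es et by simp
    from INF_lower[OF this, of "\<lambda>st. \<Sum>j. ennreal (dist_circ (fst st j) (snd st j))"]
    show ?thesis unfolding rdist_def by simp
  qed
  also have "\<dots> = (\<Sum>j<length P. ennreal (dist_circ (s j) (t j)))"
    by (rule suminf_finite) (auto simp: s_def t_def len dist_circ_def)
  also have "\<dots> = ennreal (\<Sum>j<length P. dist_circ (s j) (t j))"
  proof (rule sum_ennreal)
    fix j
    show "0 \<le> dist_circ (s j) (t j)"
      using enum_rng[OF S(1) es, of j] enum_rng[OF T(1) et, of j] by (auto simp: dist_circ_def)
  qed
  also have "(\<Sum>j<length P. dist_circ (s j) (t j)) = cost P"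
    unfolding cost_def sum_list_sum_nth by (simp add: atLeast0LessThan s_def t_def len xs_def ys_def)
  finally show "rdist S T \<le> ennreal (GI (AS S) (AS T) c)" using P(3) by (meson ennreal_leI order_trans)
  fix \<theta> :: real assume th: "\<theta> \<in> {0..2*pi}"
  have "F (AS S) \<theta> = F (mset xs) \<theta>" using th by (simp add: xsA F_zeros)
  also have "\<dots> = (\<Sum>j<length xs. Ind (s j) \<theta>)" by (subst mset_nth) (simp add: F_image s_def)
  also have "\<dots> = fS S \<theta>"
    using th by (intro fS_enum[OF S(2) es, symmetric]) (auto simp: s_def not_less)
  finally have 1: "fS S \<theta> = F (AS S) \<theta>" ..
  have "F (AS T) \<theta> = F (mset ys) \<theta>" using th by (simp add: ysA F_zeros)
  also have "\<dots> = (\<Sum>j<length ys. Ind (t j) \<theta>)" by (subst mset_nth) (simp add: F_image t_def)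
  also have "\<dots> = fS T \<theta>"
    using th by (intro fS_enum[OF T(2) et, symmetric]) (auto simp: t_def not_less)
  finally show "fS S \<theta> = F (AS S) \<theta> \<and> fS T \<theta> = F (AS T) \<theta>" using 1 by simp
qed

theorem mainTheorem13:
  assumes "S \<in> S1" and "T \<in> S1" and "finite_rank S" and "finite_rank T"
  shows "rdist S T = ennreal (rho1 (fS S) (fS T))"
proof (rule antisym)
  have Gall: "Good (AS S) (AS T) c" for c
    using good_all rng_AS assms by blast
  note fg = from_good[OF assms(1,3,2,4) Gall]
  have rep0: "\<And>\<theta>. \<theta> \<in> {0..2*pi} \<Longrightarrow> fS S \<theta> = F (AS S) \<theta> \<and> fS T \<theta> = F (AS T) \<theta>"
    by (rule fg(2))
  note rp = rho1_props[OF rep0]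
  show "rdist S T \<le> ennreal (rho1 (fS S) (fS T))"
  proof (rule ennreal_le_epsilon)
    fix e :: real assume e: "0 < e"
    obtain c where c: "GI (AS S) (AS T) c < rho1 (fS S) (fS T) + e" using rp(3) e by blast
    have "rdist S T \<le> ennreal (GI (AS S) (AS T) c)" by (rule fg(1))
    also have "\<dots> \<le> ennreal (rho1 (fS S) (fS T) + e)" using c by (intro ennreal_leI) simp
    also have "\<dots> = ennreal (rho1 (fS S) (fS T)) + ennreal e" using rp(2) e by (simp add: ennreal_plus)
    finally show "rdist S T \<le> ennreal (rho1 (fS S) (fS T)) + ennreal e" .
  qed
  show "ennreal (rho1 (fS S) (fS T)) \<le> rdist S T"
    unfolding rdist_def
  proof (rule INF_greatest)
    fix st assume "st \<in> {(s, t). enumerates s S \<and> enumerates t T}"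
    then obtain s t where st: "st = (s, t)" and es: "enumerates s S" and et: "enumerates t T" by auto
    define J where "J = {j. s j \<noteq> 0} \<union> {j. t j \<noteq> 0}"
    have J: "finite J" unfolding J_def using enum_fin[OF assms(3) es] enum_fin[OF assms(4) et] by simp
    have rg: "0 \<le> s j \<and> s j < 2*pi \<and> 0 \<le> t j \<and> t j < 2*pi" for j
      using enum_rng[OF assms(1) es] enum_rng[OF assms(2) et] by auto
    obtain c where c: "GI (image_mset s (mset_set J)) (image_mset t (mset_set J)) c \<le> (\<Sum>j\<in>J. dist_circ (s j) (t j))"
      using lower[OF J, of s t] rg by blast
    have rep: "fS S \<theta> = F (image_mset s (mset_set J)) \<theta> \<and> fS T \<theta> = F (image_mset t (mset_set J)) \<theta>"
      if "\<theta> \<in> {0..2*pi}" for \<theta>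
      using that J unfolding F_image
      by (auto intro!: fS_enum[OF assms(3) es] fS_enum[OF assms(4) et] simp: J_def)
    have "rho1 (fS S) (fS T) \<le> (\<Sum>j\<in>J. dist_circ (s j) (t j))"
      using rho1_props(1)[OF rep, of c] c by linarith
    then have "ennreal (rho1 (fS S) (fS T)) \<le> ennreal (\<Sum>j\<in>J. dist_circ (s j) (t j))"
      by (rule ennreal_leI)
    also have "\<dots> = (\<Sum>j\<in>J. ennreal (dist_circ (s j) (t j)))"
    proof (intro sum_ennreal[symmetric])
      fix j show "0 \<le> dist_circ (s j) (t j)" using rg[of j] by (auto simp: dist_circ_def abs_le_iff)
    qed
    also have "\<dots> = (\<Sum>j. ennreal (dist_circ (s j) (t j)))"
      by (rule suminf_finite[symmetric, OF J]) (auto simp: J_def dist_circ_def)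
    finally show "ennreal (rho1 (fS S) (fS T)) \<le> (\<Sum>j. ennreal (dist_circ (fst st j) (snd st j)))"
      using st by simp
  qed
qed

end
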